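(* Let $G=(V,E)$ be an undirected graph (not necessarily locally finite), let $X\subset V$ with $\mathrm{width}(X)<+\infty$, let $Y=V\setminus X$, and let $f\in L^\infty(X)$ and $g\in L^\infty(Y)$ be bounded real-valued functions. Then the Dirichlet problem \[ \begin{cases}\Delta_\infty u(x)=f(x), & x\in X,\\ u(x)=g(x), & x\in Y,\end{cases} \] admits a bounded solution $u:V\to\mathbb{R}$. Moreover, if $f\ge 0$ on $X$ or $f\le 0$ on $X$, then this bounded solution is unique (i.e. any two bounded solutions coincide).
   Context: For $x,y\in V$ write $x\sim y$ if $\{x,y\}\in E$. The combinatorial distance $d(A,B)$ between subsets $A,B\subset V$ is the infimum of the lengths $n$ of paths $A\ni x_0\sim x_1\sim\cdots\sim x_n\in B$ (and $d(A,x)=d(A,\{x\})$). The boundary of $X$ is $\partial X=\{y\notin X:\ y\sim x \text{ for some } x\in X\}$, and $\mathrm{width}(X)=\sup_{x\in X} d(\partial X,x)$. For $u:V\to\mathbb{R}$ the discrete infinity Laplacian is $\Delta_\infty u(x)=\inf_{y\sim x}u(y)+\sup_{y\sim x}u(y)-2u(x)$. *)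

theory Defs
  imports Complex_Main "HOL-Library.Extended_Nat"
begin

text \<open>A graph G = (V,E) is modelled with vertex set V = UNIV of type 'a and
 adjacency relation E (x ~ y iff E x y), required symmetric and irreflexive.
 No local finiteness is assumed.\<close>

definition is_path :: "('a \<Rightarrow> 'a \<Rightarrow> bool) \<Rightarrow> (nat \<Rightarrow> 'a) \<Rightarrow> nat \<Rightarrow> bool" where
  "is_path E p n \<longleftrightarrow> (\<forall>i<n. E (p i) (p (Suc i)))"

definition gdist :: "('a \<Rightarrow> 'a \<Rightarrow> bool) \<Rightarrow> 'a set \<Rightarrow> 'a set \<Rightarrow> enat" where
  "gdist E A B = Inf {enat n | n. \<exists>p. p 0 \<in> A \<and> p n \<in> B \<and> is_path E p n}"

definition gboundary :: "('a \<Rightarrow> 'a \<Rightarrow> bool) \<Rightarrow> 'a set \<Rightarrow> 'a set" where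
  "gboundary E X = {y. y \<notin> X \<and> (\<exists>x\<in>X. E y x)}"

definition gwidth :: "('a \<Rightarrow> 'a \<Rightarrow> bool) \<Rightarrow> 'a set \<Rightarrow> enat" where
  "gwidth E X = (SUP x\<in>X. gdist E (gboundary E X) {x})"

definition inf_laplacian :: "('a \<Rightarrow> 'a \<Rightarrow> bool) \<Rightarrow> ('a \<Rightarrow> real) \<Rightarrow> 'a \<Rightarrow> real" where
  "inf_laplacian E u x =
     (INF y\<in>{y. E x y}. u y) + (SUP y\<in>{y. E x y}. u y) - 2 * u x"

definition bounded_fun :: "('a \<Rightarrow> real) \<Rightarrow> bool" where
  "bounded_fun u \<longleftrightarrow> (\<exists>M. \<forall>x. \<bar>u x\<bar> \<le> M)"

definition bounded_on :: "'a set \<Rightarrow> ('a \<Rightarrow> real) \<Rightarrow> bool" where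
  "bounded_on S u \<longleftrightarrow> (\<exists>M. \<forall>x\<in>S. \<bar>u x\<bar> \<le> M)"

definition dirichlet_solution ::
  "('a \<Rightarrow> 'a \<Rightarrow> bool) \<Rightarrow> 'a set \<Rightarrow> ('a \<Rightarrow> real) \<Rightarrow> ('a \<Rightarrow> real) \<Rightarrow> ('a \<Rightarrow> real) \<Rightarrow> bool" where
  "dirichlet_solution E X f g u \<longleftrightarrow>
     bounded_fun u \<and> (\<forall>x\<in>X. inf_laplacian E u x = f x) \<and> (\<forall>y\<in>-X. u y = g y)"

end

theory Submission
  imports Defs
begin

lemma bfun_bdd:
  assumes "bounded_fun u"
  shows "bdd_above (u ` A)" "bdd_below (u ` A)"
proof -
  obtain M where M: "\<And>x. \<bar>u x\<bar> \<le> M" using assms unfolding bounded_fun_def by blast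
  show "bdd_above (u ` A)" unfolding bdd_above_def using M abs_le_D1 by blast
  show "bdd_below (u ` A)" unfolding bdd_below_def using M abs_le_D2
    by (metis imageE minus_le_iff)
qed

lemma INF_mono_b:
  assumes "bounded_fun u" "\<And>y. y \<in> A \<Longrightarrow> u y \<le> v y"
  shows "(INF y\<in>A. u y) \<le> (INF y\<in>A. v y)"
proof (cases "A = {}")
  case False
  show ?thesis by (rule cINF_mono) (use False assms(2) bfun_bdd(2)[OF assms(1)] in auto)
qed simp

lemma SUP_mono_b:
  assumes "bounded_fun v" "\<And>y. y \<in> A \<Longrightarrow> u y \<le> v y"
  shows "(SUP y\<in>A. u y) \<le> (SUP y\<in>A. v y)"
proof (cases "A = {}")
  case False
  show ?thesis by (rule cSUP_mono) (use False assms(2) bfun_bdd(1)[OF assms(1)] in auto)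
qed simp

lemma lap_mono:
  assumes "bounded_fun u" "bounded_fun v" "\<And>y. E x y \<Longrightarrow> u y \<le> v y" "u x = v x"
  shows "inf_laplacian E u x \<le> inf_laplacian E v x"
  unfolding inf_laplacian_def
  using INF_mono_b[OF assms(1), of "{y. E x y}" v] SUP_mono_b[OF assms(2), of "{y. E x y}" u] assms(3,4)
  by auto

lemma INF_neg: "(INF y\<in>A. - u y) = - (SUP y\<in>A. u y :: real)"
  unfolding Inf_real_def by (simp add: image_image)

lemma SUP_neg: "(SUP y\<in>A. - u y) = - (INF y\<in>A. u y :: real)"
  unfolding Inf_real_def by (simp add: image_image)

lemma lap_neg: "inf_laplacian E (\<lambda>y. - u y) x = - inf_laplacian E u x"
  unfolding inf_laplacian_def INF_neg SUP_neg by simp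

lemma bounded_neg: "bounded_fun u \<Longrightarrow> bounded_fun (\<lambda>y. - u y)"
  unfolding bounded_fun_def by simp

lemma sol_neg:
  assumes "dirichlet_solution E X f g u"
  shows "dirichlet_solution E X (\<lambda>x. - f x) (\<lambda>x. - g x) (\<lambda>x. - u x)"
  using assms unfolding dirichlet_solution_def by (simp add: bounded_neg lap_neg)

fun lvl :: "('a \<Rightarrow> 'a \<Rightarrow> bool) \<Rightarrow> 'a set \<Rightarrow> nat \<Rightarrow> 'a set" where
  "lvl E X 0 = - X"
| "lvl E X (Suc k) = lvl E X k \<union> {x\<in>X. \<exists>z. E x z \<and> z \<in> lvl E X k}"

lemma lvl_mono: "k \<le> m \<Longrightarrow> lvl E X k \<subseteq> lvl E X m"
  by (induction m) (auto simp: le_Suc_eq)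

lemma path_lvl:
  assumes sym: "\<And>x y. E x y \<Longrightarrow> E y x"
  shows "is_path E p n \<Longrightarrow> p 0 \<notin> X \<Longrightarrow> p n \<in> lvl E X n"
proof (induction n)
  case 0 then show ?case by simp
next
  case (Suc n)
  have "is_path E p n" using Suc.prems unfolding is_path_def by auto
  then have h: "p n \<in> lvl E X n" using Suc by auto
  have "E (p (Suc n)) (p n)" using Suc.prems sym unfolding is_path_def by auto
  then show ?case using h lvl_mono[of 0 n E X] by (cases "p (Suc n) \<in> X") auto
qed

lemma width_lvl:
  assumes sym: "\<And>x y. E x y \<Longrightarrow> E y x"
    and width: "gwidth E X < \<infinity>"
  shows "\<exists>N. \<forall>x. x \<in> lvl E X N"
proof -
  obtain N where N: "gwidth E X = enat N" using width by (cases "gwidth E X") auto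
  have "x \<in> lvl E X N" if "x \<in> X" for x
  proof -
    let ?S = "{enat n | n. \<exists>p. p 0 \<in> gboundary E X \<and> p n \<in> {x} \<and> is_path E p n}"
    have "gdist E (gboundary E X) {x} \<le> gwidth E X"
      unfolding gwidth_def using that by (rule SUP_upper)
    then have le: "Inf ?S \<le> enat N" using N unfolding gdist_def by simp
    have ne: "?S \<noteq> {}"
    proof
      assume "?S = {}"
      then have "Inf ?S = \<infinity>" by (metis Inf_empty top_enat_def)
      with le show False by simp
    qed
    obtain z where z: "z \<in> ?S" using ne by blast
    have "Inf ?S \<in> ?S" unfolding Inf_enat_def if_not_P[OF ne] by (rule LeastI[of "\<lambda>z. z \<in> ?S", OF z])
    then obtain n p where np: "Inf ?S = enat n" "p 0 \<in> gboundary E X" "p n = x" "is_path E p n" by auto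
    have "p n \<in> lvl E X n" using path_lvl[OF sym np(4)] np(2) unfolding gboundary_def by auto
    moreover have "n \<le> N" using le np(1) by simp
    ultimately show ?thesis using lvl_mono[of n N E X] np(3) by auto
  qed
  moreover have "x \<in> lvl E X N" if "x \<notin> X" for x using that lvl_mono[of 0 N E X] by auto
  ultimately show ?thesis by blast
qed

definition lev :: "('a \<Rightarrow> 'a \<Rightarrow> bool) \<Rightarrow> 'a set \<Rightarrow> 'a \<Rightarrow> nat" where
  "lev E X x = (LEAST k. x \<in> lvl E X k)"

context
  fixes E :: "'a \<Rightarrow> 'a \<Rightarrow> bool" and X :: "'a set" and N :: nat
  assumes sym: "\<And>x y. E x y \<Longrightarrow> E y x"
    and allN: "\<And>x. x \<in> lvl E X N"
begin

lemma lev_le: "lev E X x \<le> N"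
  unfolding lev_def by (rule Least_le) (rule allN)

lemma lev_in: "x \<in> lvl E X (lev E X x)"
  unfolding lev_def by (rule LeastI) (rule allN)

lemma lev_le_of: "x \<in> lvl E X k \<Longrightarrow> lev E X x \<le> k"
  unfolding lev_def by (rule Least_le)

lemma lev_Y: "x \<notin> X \<Longrightarrow> lev E X x = 0"
  using lev_le_of[of x 0] by simp

lemma lev_X: assumes "x \<in> X" shows "1 \<le> lev E X x" "\<exists>z. E x z \<and> lev E X z + 1 \<le> lev E X x"
proof -
  have "lev E X x \<noteq> 0" using lev_in[of x] assms by (metis Compl_iff lvl.simps(1))
  then obtain k where k: "lev E X x = Suc k" using not0_implies_Suc by blast
  then show "1 \<le> lev E X x" by simp
  have "x \<notin> lvl E X k" using lev_le_of[of x k] k by auto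
  moreover have "x \<in> lvl E X (Suc k)" using lev_in[of x] k by simp
  ultimately obtain z where "E x z" "z \<in> lvl E X k" by auto
  then show "\<exists>z. E x z \<and> lev E X z + 1 \<le> lev E X x" using lev_le_of[of z k] k by auto
qed

lemma lev_nb: assumes "x \<in> X" "E x y" shows "lev E X y \<le> lev E X x + 1"
proof (cases "y \<in> X")
  case True
  have "y \<in> lvl E X (Suc (lev E X x))" using True sym[OF assms(2)] lev_in[of x] by auto
  then show ?thesis using lev_le_of by fastforce
qed (simp add: lev_Y)

lemma barrier:
  fixes f :: "'a \<Rightarrow> real" and F G :: real
  assumes F: "F \<ge> 0" "\<And>x. x \<in> X \<Longrightarrow> f x \<le> F" and G: "G \<ge> 0"
  shows "\<exists>a. bounded_fun a \<and> (\<forall>x\<in>X. f x \<le> inf_laplacian E a x) \<and> (\<forall>x. a x \<le> -G)"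
proof -
  define \<phi> :: "nat \<Rightarrow> real" where "\<phi> k = -G - F/2*(real N+1)^2 + F/2*(real N + 1 - real k)^2" for k
  define a where "a x = \<phi> (lev E X x)" for x
  have anti: "\<phi> k \<le> \<phi> j" if "j \<le> k" "k \<le> N+1" for j k
  proof -
    have "(real N + 1 - real k)^2 \<le> (real N + 1 - real j)^2"
      by (rule power_mono) (use that in auto)
    then show ?thesis unfolding \<phi>_def using F(1) by (simp add: mult_left_mono)
  qed
  have up: "a x \<le> -G" for x
  proof -
    have "(real N + 1 - real (lev E X x))^2 \<le> (real N+1)^2"
      by (rule power_mono) (use lev_le[of x] in auto)
    then show ?thesis unfolding a_def \<phi>_def using F(1) by (simp add: mult_left_mono)
  qed
  have lo: "-G - F/2*(real N+1)^2 \<le> a x" for x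
    unfolding a_def \<phi>_def using F(1) by simp
  have bd: "bounded_fun a" unfolding bounded_fun_def
  proof (rule exI[of _ "G + F/2*(real N+1)^2"], intro allI)
    fix x
    have "0 \<le> F/2*(real N+1)^2" using F(1) by simp
    then show "\<bar>a x\<bar> \<le> G + F/2*(real N+1)^2" using up[of x] lo[of x] G by (simp add: abs_le_iff)
  qed
  have lap: "f x \<le> inf_laplacian E a x" if x: "x \<in> X" for x
  proof -
    define k where "k = lev E X x"
    obtain z where z: "E x z" "lev E X z + 1 \<le> k" using lev_X(2)[OF x] k_def by auto
    have k1: "1 \<le> k" "k \<le> N" using lev_X(1)[OF x] lev_le[of x] k_def by auto
    have I: "\<phi> (k+1) \<le> (INF y\<in>{y. E x y}. a y)"
    proof (rule cINF_greatest)
      show "{y. E x y} \<noteq> {}" using z by auto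
      fix y assume "y \<in> {y. E x y}"
      then have "lev E X y \<le> k + 1" using lev_nb[OF x] k_def by auto
      then show "\<phi> (k+1) \<le> a y" unfolding a_def using anti k1 by auto
    qed
    have S: "\<phi> (k-1) \<le> (SUP y\<in>{y. E x y}. a y)"
    proof (rule cSUP_upper2)
      show "bdd_above (a ` {y. E x y})" using bfun_bdd[OF bd] by auto
      show "z \<in> {y. E x y}" using z by auto
      show "\<phi> (k-1) \<le> a z" unfolding a_def using anti z k1 by auto
    qed
    have eq: "\<phi> (k+1) + \<phi> (k-1) - 2 * \<phi> k = F"
    proof -
      have r: "real (k-1) = real k - 1" using k1 by auto
      show ?thesis unfolding \<phi>_def r by (simp add: power2_eq_square algebra_simps)
    qed
    have "a x = \<phi> k" unfolding a_def k_def ..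
    then show ?thesis unfolding inf_laplacian_def using I S eq F(2)[OF x] by linarith
  qed
  show ?thesis using bd lap up by blast
qed

end


lemma perron:
  fixes E :: "'a \<Rightarrow> 'a \<Rightarrow> bool" and f g a U :: "'a \<Rightarrow> real"
  assumes irrefl: "\<And>x. \<not> E x x"
    and a: "bounded_fun a" "\<forall>x\<in>X. f x \<le> inf_laplacian E a x" "\<forall>y\<in>-X. a y \<le> g y"
    and U: "bounded_fun U" "\<forall>x\<in>X. inf_laplacian E U x \<le> f x" "\<forall>y\<in>-X. g y \<le> U y"
    and aU: "\<forall>x. a x \<le> U x"
    and gb: "bounded_on (-X) g"
  shows "\<exists>u. dirichlet_solution E X f g u"
proof -
  define C where "C = {u. bounded_fun u \<and> (\<forall>x\<in>X. f x \<le> inf_laplacian E u x) \<and> (\<forall>y\<in>-X. u y \<le> g y) \<and> (\<forall>x. u x \<le> U x)}"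
  define us where "us x = (SUP u\<in>C. u x)" for x
  have aC: "a \<in> C" unfolding C_def using a aU by auto
  have Cne: "C \<noteq> {}" using aC by auto
  have ub: "u x \<le> us x" if "u \<in> C" for u x
    unfolding us_def
  proof (rule cSUP_upper[OF that])
    show "bdd_above ((\<lambda>u. u x) ` C)" unfolding bdd_above_def C_def by auto
  qed
  have usU: "us x \<le> U x" for x
    unfolding us_def by (rule cSUP_least[OF Cne]) (auto simp: C_def)
  have aus: "a x \<le> us x" for x using ub[OF aC] .
  obtain Ma where Ma: "\<And>x. \<bar>a x\<bar> \<le> Ma" using a(1) unfolding bounded_fun_def by blast
  obtain MU where MU: "\<And>x. \<bar>U x\<bar> \<le> MU" using U(1) unfolding bounded_fun_def by blast
  have bd: "bounded_fun us" unfolding bounded_fun_def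
  proof (rule exI[of _ "Ma + MU"], intro allI)
    fix x show "\<bar>us x\<bar> \<le> Ma + MU" using Ma[of x] MU[of x] aus[of x] usU[of x] by (simp add: abs_le_iff)
  qed
  have sub: "f x \<le> inf_laplacian E us x" if x: "x \<in> X" for x
  proof -
    let ?I = "INF y\<in>{y. E x y}. us y" and ?S = "SUP y\<in>{y. E x y}. us y"
    have "u x \<le> (?I + ?S - f x) / 2" if u: "u \<in> C" for u
    proof -
      have bu: "bounded_fun u" and fu: "f x \<le> inf_laplacian E u x" using u x unfolding C_def by auto
      have "(INF y\<in>{y. E x y}. u y) \<le> ?I" by (rule INF_mono_b[OF bu]) (rule ub[OF u])
      moreover have "(SUP y\<in>{y. E x y}. u y) \<le> ?S" by (rule SUP_mono_b[OF bd]) (rule ub[OF u])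
      ultimately show ?thesis using fu unfolding inf_laplacian_def by (simp add: field_simps)
    qed
    then have "us x \<le> (?I + ?S - f x) / 2" unfolding us_def by (intro cSUP_least[OF Cne]) auto
    then show ?thesis unfolding inf_laplacian_def by (simp add: field_simps)
  qed
  have usY: "us y \<le> g y" if "y \<notin> X" for y
    unfolding us_def by (rule cSUP_least[OF Cne]) (use that in \<open>auto simp: C_def\<close>)
  have usC: "us \<in> C" unfolding C_def using bd sub usY usU by auto
  have eqY: "us y = g y" if y: "y \<notin> X" for y
  proof -
    define u' where "u' z = (if z \<in> X then us z else g z)" for z
    obtain Mg where Mg: "\<And>z. z \<in> -X \<Longrightarrow> \<bar>g z\<bar> \<le> Mg" using gb unfolding bounded_on_def by blast
    obtain Mu where Mu: "\<And>z. \<bar>us z\<bar> \<le> Mu" using bd unfolding bounded_fun_def by blast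
    have bu': "bounded_fun u'" unfolding bounded_fun_def
    proof (rule exI[of _ "max 0 Mg + Mu"], intro allI)
      fix z show "\<bar>u' z\<bar> \<le> max 0 Mg + Mu" using Mg[of z] Mu[of z] unfolding u'_def
        by (cases "z \<in> X") (auto simp: abs_le_iff)
    qed
    have ge: "us z \<le> u' z" for z unfolding u'_def using usY by auto
    have "u' \<in> C" unfolding C_def
    proof (intro CollectI conjI ballI allI)
      show "bounded_fun u'" by (rule bu')
      fix x assume x: "x \<in> X"
      have "inf_laplacian E us x \<le> inf_laplacian E u' x"
        by (rule lap_mono[OF bd bu']) (use ge x in \<open>auto simp: u'_def\<close>)
      then show "f x \<le> inf_laplacian E u' x" using sub[OF x] by linarith
    next
      fix z assume "z \<in> -X" then show "u' z \<le> g z" by (simp add: u'_def)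
    next
      fix z show "u' z \<le> U z" using usU[of z] U(3) by (auto simp: u'_def)
    qed
    then have "u' y \<le> us y" by (rule ub)
    then show ?thesis using usY[OF y] y by (simp add: u'_def)
  qed
  have super: "inf_laplacian E us x \<le> f x" if x: "x \<in> X" for x
  proof (rule ccontr)
    assume "\<not> ?thesis"
    then have gt: "f x < inf_laplacian E us x" by simp
    have lt: "us x < U x"
    proof (rule ccontr)
      assume "\<not> us x < U x"
      then have "us x = U x" using usU[of x] by simp
      then have "inf_laplacian E us x \<le> inf_laplacian E U x"
        using lap_mono[OF bd U(1), of E x] usU by auto
      then show False using gt U(2) x by auto
    qed
    define t where "t = min ((inf_laplacian E us x - f x)/2) (U x - us x)"
    have t: "t > 0" using gt lt unfolding t_def by simp
    define w where "w = us(x := us x + t)"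
    have nb: "(INF y\<in>{y. E x y}. w y) = (INF y\<in>{y. E x y}. us y)"
             "(SUP y\<in>{y. E x y}. w y) = (SUP y\<in>{y. E x y}. us y)"
      using irrefl by (auto simp: w_def intro!: INF_cong SUP_cong)
    have lapx: "inf_laplacian E w x = inf_laplacian E us x - 2 * t"
      unfolding inf_laplacian_def nb by (simp add: w_def)
    obtain Mu where Mu: "\<And>z. \<bar>us z\<bar> \<le> Mu" using bd unfolding bounded_fun_def by blast
    have bw: "bounded_fun w" unfolding bounded_fun_def
    proof (rule exI[of _ "Mu + t"], intro allI)
      fix z show "\<bar>w z\<bar> \<le> Mu + t" using Mu[of z] t unfolding w_def by (auto simp: abs_le_iff)
    qed
    have "w \<in> C" unfolding C_def
    proof (intro CollectI conjI ballI allI)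
      show "bounded_fun w" by (rule bw)
      fix z assume z: "z \<in> X"
      show "f z \<le> inf_laplacian E w z"
      proof (cases "z = x")
        case True
        have "t \<le> (inf_laplacian E us x - f x)/2" unfolding t_def by (rule min.cobounded1)
        then show ?thesis using lapx True by simp
      next
        case False
        have "inf_laplacian E us z \<le> inf_laplacian E w z"
          by (rule lap_mono[OF bd bw]) (use False t in \<open>auto simp: w_def\<close>)
        then show ?thesis using sub[OF z] by linarith
      qed
    next
      fix z assume "z \<in> -X" then show "w z \<le> g z" using x usY by (auto simp: w_def)
    next
      fix z show "w z \<le> U z" using usU[of z] unfolding w_def t_def by auto
    qed
    then have "w x \<le> us x" by (rule ub)
    then show False using t by (simp add: w_def)
  qed
  have "dirichlet_solution E X f g us"
    unfolding dirichlet_solution_def using bd sub super eqY by (auto intro: antisym)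
  then show ?thesis by blast
qed


lemma sq_less_abs: fixes a r :: real assumes "a^2 < r^2" "r > 0" shows "\<bar>a\<bar> < r"
  by (rule power_less_imp_less_base[of _ 2]) (use assms in simp_all)

lemma uniq_le:
  fixes E :: "'a \<Rightarrow> 'a \<Rightarrow> bool" and f g u v :: "'a \<Rightarrow> real"
  assumes allN: "\<And>x. x \<in> lvl E X N"
    and su: "dirichlet_solution E X f g u" and sv: "dirichlet_solution E X f g v"
    and f0: "\<forall>x\<in>X. f x \<ge> 0"
  shows "u m \<le> v m"
proof (rule ccontr)
  assume "\<not> u m \<le> v m"
  define c where "c = u m - v m"
  have c: "c > 0" using \<open>\<not> u m \<le> v m\<close> c_def by simp
  have bu: "bounded_fun u" and bv: "bounded_fun v" using su sv unfolding dirichlet_solution_def by auto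
  have lu: "\<And>x. x \<in> X \<Longrightarrow> inf_laplacian E u x = f x" and lv: "\<And>x. x \<in> X \<Longrightarrow> inf_laplacian E v x = f x"
    using su sv unfolding dirichlet_solution_def by auto
  have uvY: "\<And>y. y \<notin> X \<Longrightarrow> u y = v y" using su sv unfolding dirichlet_solution_def by auto
  obtain B1 where B1: "\<And>x. \<bar>u x\<bar> \<le> B1" using bu unfolding bounded_fun_def by blast
  obtain B2 where B2: "\<And>x. \<bar>v x\<bar> \<le> B2" using bv unfolding bounded_fun_def by blast
  define B where "B = max 1 (max B1 B2)"
  have B: "B > 0" "\<And>x. \<bar>u x\<bar> \<le> B" "\<And>x. \<bar>v x\<bar> \<le> B"
    using B1 B2 unfolding B_def by (auto intro: order.trans[OF _ max.cobounded2] order.trans[OF _ max.cobounded1])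
  define \<eta> where "\<eta> = c / (8 * B^2 + 1)"
  have \<eta>: "\<eta> > 0" "8 * \<eta> * B^2 < c"
  proof -
    have "0 \<le> B^2" by simp
    then have pos: "8 * B^2 + 1 > 0" by linarith
    then show "\<eta> > 0" unfolding \<eta>_def using c by simp
    have "8 * B^2 * c < (8 * B^2 + 1) * c" using c by simp
    then show "8 * \<eta> * B^2 < c" unfolding \<eta>_def using pos by (simp add: field_simps)
  qed
  define w where "w x = u x - v x" for x
  define s where "s x = u x + B" for x
  define \<Phi> where "\<Phi> x = w x + \<eta> * (s x)^2" for x
  have s_bd: "0 \<le> s x" "s x \<le> 2 * B" for x using B(2)[of x] unfolding s_def by (auto simp: abs_le_iff)
  have s2: "(s x)^2 \<le> 4 * B^2" for x
  proof -
    have "(s x)^2 \<le> (2*B)^2" by (rule power_mono) (use s_bd in auto)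
    then show ?thesis by (simp add: power_mult_distrib)
  qed
  have \<Phi>_up: "\<Phi> x \<le> 2 * B + \<eta> * (4 * B^2)" for x
  proof -
    have "w x \<le> 2 * B" using B(2,3)[of x] unfolding w_def by (auto simp: abs_le_iff)
    moreover have "\<eta> * (s x)^2 \<le> \<eta> * (4 * B^2)" using s2 \<eta>(1) by (simp add: mult_left_mono)
    ultimately show ?thesis unfolding \<Phi>_def by linarith
  qed
  define P where "P = (SUP x. \<Phi> x)"
  have bddP: "bdd_above (range \<Phi>)" unfolding bdd_above_def using \<Phi>_up by blast
  have le_P: "\<Phi> x \<le> P" for x unfolding P_def by (rule cSUP_upper[OF _ bddP]) simp
  have Pc: "c \<le> P"
  proof -
    have "c \<le> \<Phi> m" unfolding \<Phi>_def w_def c_def using \<eta>(1) by simp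
    then show ?thesis using le_P[of m] by linarith
  qed
  have \<Phi>Y: "\<Phi> y \<le> P - c/2" if "y \<notin> X" for y
  proof -
    have "\<eta> * (s y)^2 \<le> \<eta> * (4 * B^2)" using s2 \<eta>(1) by (simp add: mult_left_mono)
    then show ?thesis unfolding \<Phi>_def w_def using uvY[OF that] \<eta>(2) Pc by simp
  qed
  have local: "\<exists>\<delta>>0. \<forall>x\<in>X. P - \<delta> < \<Phi> x \<longrightarrow> (\<forall>z. E x z \<longrightarrow> P - e < \<Phi> z)" if e: "e > 0" for e
  proof -
    define \<rho> where "\<rho> = e / (6 + 12 * \<eta> * B)"
    have dp: "6 + 12 * \<eta> * B > 0" using \<eta>(1) B(1) by (simp add: add_pos_pos)
    have \<rho>: "\<rho> > 0" unfolding \<rho>_def using e dp by simp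
    have \<rho>e: "(6 + 12 * \<eta> * B) * \<rho> = e" unfolding \<rho>_def using dp by simp
    define \<delta> where "\<delta> = min \<rho> (\<rho>^2 / (4/\<eta> + 4*B))"
    have den: "4/\<eta> + 4*B > 0" using \<eta>(1) B(1) by (simp add: add_pos_pos)
    have \<delta>: "\<delta> > 0" "\<delta> \<le> \<rho>" "\<delta> * (4/\<eta> + 4*B) \<le> \<rho>^2"
    proof -
      show "\<delta> > 0" unfolding \<delta>_def using \<rho> den by simp
      show "\<delta> \<le> \<rho>" unfolding \<delta>_def by simp
      have "\<delta> \<le> \<rho>^2 / (4/\<eta> + 4*B)" unfolding \<delta>_def by simp
      then show "\<delta> * (4/\<eta> + 4*B) \<le> \<rho>^2" using den by (simp add: pos_le_divide_eq)
    qed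
    have "\<forall>x\<in>X. P - \<delta> < \<Phi> x \<longrightarrow> (\<forall>z. E x z \<longrightarrow> P - e < \<Phi> z)"
    proof (intro ballI impI allI)
      fix x z assume x: "x \<in> X" and hx: "P - \<delta> < \<Phi> x" and z: "E x z"
      define Nb where "Nb = {y. E x y}"
      have Nb: "Nb \<noteq> {}" "z \<in> Nb" using z unfolding Nb_def by auto
      define Iu where "Iu = (INF y\<in>Nb. u y)"
      define Su where "Su = (SUP y\<in>Nb. u y)"
      define Iv where "Iv = (INF y\<in>Nb. v y)"
      define Sv where "Sv = (SUP y\<in>Nb. v y)"
      have Iu: "\<And>y. y \<in> Nb \<Longrightarrow> Iu \<le> u y" unfolding Iu_def by (rule cINF_lower[OF bfun_bdd(2)[OF bu]])
      have Su: "\<And>y. y \<in> Nb \<Longrightarrow> u y \<le> Su" unfolding Su_def by (rule cSUP_upper[OF _ bfun_bdd(1)[OF bu]])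
      have Iv: "\<And>y. y \<in> Nb \<Longrightarrow> Iv \<le> v y" unfolding Iv_def by (rule cINF_lower[OF bfun_bdd(2)[OF bv]])
      have Sv: "\<And>y. y \<in> Nb \<Longrightarrow> v y \<le> Sv" unfolding Sv_def by (rule cSUP_upper[OF _ bfun_bdd(1)[OF bv]])
      obtain yS where yS: "yS \<in> Nb" "Su - \<delta> < u yS"
      proof -
        have "Su - \<delta> < Su" using \<delta>(1) by simp
        then show ?thesis using that unfolding Su_def using less_cSUP_iff[OF Nb(1) bfun_bdd(1)[OF bu]] by blast
      qed
      obtain yI where yI: "yI \<in> Nb" "v yI < Iv + \<delta>"
      proof -
        have "Iv < Iv + \<delta>" using \<delta>(1) by simp
        then show ?thesis using that unfolding Iv_def using cINF_less_iff[OF Nb(1) bfun_bdd(2)[OF bv]] by blast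
      qed
      have equ: "Iu + Su - 2 * u x = f x" using lu[OF x] unfolding inf_laplacian_def Iu_def Su_def Nb_def by simp
      have eqv: "Iv + Sv - 2 * v x = f x" using lv[OF x] unfolding inf_laplacian_def Iv_def Sv_def Nb_def by simp
      have fx: "f x \<ge> 0" using f0 x by auto
      define t where "t = s x"
      define \<alpha> where "\<alpha> = u yS - u x"
      define \<beta> where "\<beta> = u yI - u x"
      have t: "0 \<le> t" "t \<le> 2 * B" unfolding t_def using s_bd by auto
      have sS: "s yS = t + \<alpha>" and sI: "s yI = t + \<beta>" unfolding s_def t_def \<alpha>_def \<beta>_def by simp_all
      have a1: "2 * w x < w yS + w yI + 2 * \<delta>"
        using Iu[OF yI(1)] Sv[OF yS(1)] yS(2) yI(2) equ eqv unfolding w_def by (simp add: algebra_simps)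
      have PS: "w yS + \<eta> * (s yS)^2 \<le> P" and PI: "w yI + \<eta> * (s yI)^2 \<le> P"
        using le_P[of yS] le_P[of yI] unfolding \<Phi>_def by auto
      have Px: "P - \<delta> < w x + \<eta> * t^2" using hx unfolding \<Phi>_def t_def by simp
      have b: "\<eta> * ((s yS)^2 + (s yI)^2) < 2 * \<eta> * t^2 + 4 * \<delta>"
        using a1 PS PI Px by (simp add: algebra_simps; linarith?)
      have cc: "\<alpha> + \<beta> > - \<delta>"
        using Iu[OF yI(1)] yS(2) equ fx unfolding \<alpha>_def \<beta>_def by linarith
      have id: "(s yS)^2 + (s yI)^2 = 2 * t^2 + 2 * t * (\<alpha> + \<beta>) + (\<alpha>^2 + \<beta>^2)"
        unfolding sS sI by (simp add: power2_eq_square algebra_simps)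
      have b2: "\<eta> * (2 * t * (\<alpha> + \<beta>) + (\<alpha>^2 + \<beta>^2)) < 4 * \<delta>"
        using b unfolding id by (simp add: algebra_simps)
      have b3: "2 * t * (\<alpha> + \<beta>) + (\<alpha>^2 + \<beta>^2) < 4 * \<delta> / \<eta>"
        using b2 \<eta>(1) by (simp add: pos_less_divide_eq mult.commute)
      have tab: "t * (- \<delta>) \<le> t * (\<alpha> + \<beta>)" using cc t(1) by (intro mult_left_mono) auto
      have td: "t * \<delta> \<le> 2 * B * \<delta>" using t(2) \<delta>(1) by (intro mult_right_mono) auto
      have ab: "\<alpha>^2 + \<beta>^2 < \<rho>^2"
      proof -
        have "\<alpha>^2 + \<beta>^2 < 4 * \<delta> / \<eta> + 4 * B * \<delta>" using b3 tab td by simp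
        also have "\<dots> = \<delta> * (4/\<eta> + 4*B)" by (simp add: algebra_simps)
        also have "\<dots> \<le> \<rho>^2" by (rule \<delta>(3))
        finally show ?thesis .
      qed
      have "\<alpha>^2 < \<rho>^2" "\<beta>^2 < \<rho>^2" using ab by (auto intro: add_nonneg_nonneg order.strict_trans1[rotated] simp: add_increasing2 add_increasing)
      then have \<alpha>\<rho>: "\<bar>\<alpha>\<bar> < \<rho>" and \<beta>\<rho>: "\<bar>\<beta>\<bar> < \<rho>" using sq_less_abs \<rho> by auto
      have SuB: "Su < u x + \<rho> + \<delta>" using yS(2) \<alpha>\<rho> unfolding \<alpha>_def by (simp add: abs_less_iff)
      have IuB: "Iu > u x - \<rho> - \<delta>" using SuB equ fx by linarith
      have wz: "w z > P - 4 * \<delta> - 2 * \<rho> - 2 * \<eta> * t^2 + \<eta> * (s yI)^2"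
        using Iu[OF Nb(2)] Sv[OF Nb(2)] Iv[OF yI(1)] equ eqv yI(2) SuB \<beta>\<rho> PI Px
        unfolding w_def \<beta>_def by (simp add: abs_less_iff; linarith?)
      define \<gamma> where "\<gamma> = u z - u x"
      have \<gamma>: "\<gamma> > - (\<rho> + \<delta>)" using Iu[OF Nb(2)] IuB unfolding \<gamma>_def by linarith
      have sz: "s z = t + \<gamma>" unfolding s_def t_def \<gamma>_def by simp
      have q1: "(s yI)^2 - t^2 \<ge> - 4 * B * \<rho>"
      proof -
        have e1: "(s yI)^2 - t^2 = 2 * (t * \<beta>) + \<beta>^2" unfolding sI by (simp add: power2_eq_square algebra_simps)
        have e2: "- (t * \<rho>) \<le> t * \<beta>" using mult_left_mono[of "- \<rho>" \<beta> t] \<beta>\<rho> t(1) by (auto simp: abs_less_iff)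
        have e3: "t * \<rho> \<le> 2 * (B * \<rho>)" using mult_right_mono[of t "2*B" \<rho>] t(2) \<rho> by auto
        have "0 \<le> \<beta>^2" by simp
        then show ?thesis using e1 e2 e3 by linarith
      qed
      have q2: "(s z)^2 - t^2 \<ge> - 4 * B * (\<rho> + \<delta>)"
      proof -
        have e1: "(s z)^2 - t^2 = 2 * (t * \<gamma>) + \<gamma>^2" unfolding sz by (simp add: power2_eq_square algebra_simps)
        have e2: "- (t * (\<rho> + \<delta>)) \<le> t * \<gamma>" using mult_left_mono[of "- (\<rho> + \<delta>)" \<gamma> t] \<gamma> t(1) by (simp add: algebra_simps)
        have e3: "t * (\<rho> + \<delta>) \<le> 2 * (B * (\<rho> + \<delta>))" using mult_right_mono[of t "2*B" "\<rho> + \<delta>"] t(2) \<rho> \<delta>(1) by auto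
        have "0 \<le> \<gamma>^2" by simp
        then show ?thesis using e1 e2 e3 by linarith
      qed
      have q: "\<eta> * ((s yI)^2 + (s z)^2 - 2 * t^2) \<ge> \<eta> * (- 4 * B * \<rho> - 4 * B * (\<rho> + \<delta>))"
        using q1 q2 \<eta>(1) by (intro mult_left_mono) auto
      have q3: "\<eta> * (- 4 * B * \<rho> - 4 * B * (\<rho> + \<delta>)) \<ge> \<eta> * (- 12 * B * \<rho>)"
        using \<eta>(1) B(1) \<delta>(2) by (intro mult_left_mono) auto
      have "\<Phi> z > P - 4 * \<delta> - 2 * \<rho> + \<eta> * ((s yI)^2 + (s z)^2 - 2 * t^2)"
        using wz unfolding \<Phi>_def by (simp add: algebra_simps)
      then have "\<Phi> z > P - 6 * \<rho> - 12 * \<eta> * B * \<rho>" using q q3 \<delta>(2) by (simp add: algebra_simps; linarith?)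
      also have "P - 6 * \<rho> - 12 * \<eta> * B * \<rho> = P - e" using \<rho>e by (simp add: algebra_simps)
      finally show "P - e < \<Phi> z" .
    qed
    then show ?thesis using \<delta>(1) by blast
  qed
  have lv_bound: "\<exists>\<epsilon>>0. \<forall>x\<in>lvl E X k. \<Phi> x \<le> P - \<epsilon>" for k
  proof (induction k)
    case 0
    show ?case using \<Phi>Y c by (intro exI[of _ "c/2"]) auto
  next
    case (Suc k)
    then obtain \<epsilon> where \<epsilon>: "\<epsilon> > 0" "\<forall>x\<in>lvl E X k. \<Phi> x \<le> P - \<epsilon>" by blast
    obtain \<delta> where \<delta>: "\<delta> > 0" "\<forall>x\<in>X. P - \<delta> < \<Phi> x \<longrightarrow> (\<forall>z. E x z \<longrightarrow> P - \<epsilon> < \<Phi> z)"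
      using local[OF \<epsilon>(1)] by blast
    have "\<Phi> x \<le> P - min \<epsilon> \<delta>" if x: "x \<in> lvl E X (Suc k)" for x
    proof (cases "x \<in> lvl E X k")
      case True then show ?thesis using \<epsilon>(2) by fastforce
    next
      case False
      then obtain z where z: "x \<in> X" "E x z" "z \<in> lvl E X k" using x by auto
      have "\<not> P - \<delta> < \<Phi> x" using \<delta>(2) z \<epsilon>(2) by fastforce
      then show ?thesis by linarith
    qed
    then show ?case using \<epsilon>(1) \<delta>(1) by (intro exI[of _ "min \<epsilon> \<delta>"]) auto
  qed
  obtain \<epsilon> where \<epsilon>: "\<epsilon> > 0" "\<forall>x\<in>lvl E X N. \<Phi> x \<le> P - \<epsilon>" using lv_bound by blast
  have "P \<le> P - \<epsilon>" unfolding P_def using \<epsilon>(2) allN by (intro cSUP_least) (auto simp: P_def)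
  then show False using \<epsilon>(1) by simp
qed


theorem theorem1p1:
  fixes E :: "'a \<Rightarrow> 'a \<Rightarrow> bool" and X :: "'a set" and f g :: "'a \<Rightarrow> real"
  assumes sym: "\<And>x y. E x y \<Longrightarrow> E y x"
    and irrefl: "\<And>x. \<not> E x x"
    and width: "gwidth E X < \<infinity>"
    and f_bd: "bounded_on X f"
    and g_bd: "bounded_on (- X) g"
  shows "(\<exists>u. dirichlet_solution E X f g u) \<and>
         (((\<forall>x\<in>X. f x \<ge> 0) \<or> (\<forall>x\<in>X. f x \<le> 0)) \<longrightarrow>
            (\<forall>u v. dirichlet_solution E X f g u \<and> dirichlet_solution E X f g v \<longrightarrow> u = v))"
proof
  obtain N where allN: "\<And>x. x \<in> lvl E X N" using width_lvl[OF sym width] by blast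
  show "\<exists>u. dirichlet_solution E X f g u"
  proof -
    obtain Mf where Mf: "\<And>x. x \<in> X \<Longrightarrow> \<bar>f x\<bar> \<le> Mf" using f_bd unfolding bounded_on_def by blast
    obtain Mg where Mg: "\<And>x. x \<in> -X \<Longrightarrow> \<bar>g x\<bar> \<le> Mg" using g_bd unfolding bounded_on_def by blast
    define F where "F = max 0 Mf"
    define G where "G = max 0 Mg"
    have F: "F \<ge> 0" "\<And>x. x \<in> X \<Longrightarrow> f x \<le> F" "\<And>x. x \<in> X \<Longrightarrow> - f x \<le> F"
      using Mf unfolding F_def by (force simp: abs_le_iff)+
    have G: "G \<ge> 0" "\<And>x. x \<in> -X \<Longrightarrow> - G \<le> g x" "\<And>x. x \<in> -X \<Longrightarrow> g x \<le> G"
      using Mg unfolding G_def by (force simp: abs_le_iff)+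
    obtain a where a: "bounded_fun a" "\<forall>x\<in>X. f x \<le> inf_laplacian E a x" "\<forall>x. a x \<le> -G"
      using barrier[where E=E and X=X and N=N and f=f and F=F and G=G] sym allN F(1,2) G(1) by blast
    obtain a' where a': "bounded_fun a'" "\<forall>x\<in>X. - f x \<le> inf_laplacian E a' x" "\<forall>x. a' x \<le> -G"
      using barrier[where E=E and X=X and N=N and f="\<lambda>x. - f x" and F=F and G=G] sym allN F(1,3) G(1) by blast
    define U where "U x = - a' x" for x
    have U: "bounded_fun U" "\<forall>x\<in>X. inf_laplacian E U x \<le> f x" "\<forall>y\<in>-X. g y \<le> U y"
      using a' G(3) unfolding U_def by (auto simp: bounded_neg lap_neg) (smt (verit) ComplI)
    have aY: "\<forall>y\<in>-X. a y \<le> g y" using a(3) G(2) by (auto intro: order.trans)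
    have aU: "\<forall>x. a x \<le> U x" using a(3) a'(3) G(1) unfolding U_def by (smt (verit))
    show ?thesis by (rule perron[OF irrefl a(1,2) aY U aU g_bd])
  qed
  show "((\<forall>x\<in>X. f x \<ge> 0) \<or> (\<forall>x\<in>X. f x \<le> 0)) \<longrightarrow>
            (\<forall>u v. dirichlet_solution E X f g u \<and> dirichlet_solution E X f g v \<longrightarrow> u = v)"
  proof (intro impI allI, elim conjE)
    fix u v assume sg: "(\<forall>x\<in>X. f x \<ge> 0) \<or> (\<forall>x\<in>X. f x \<le> 0)"
      and su: "dirichlet_solution E X f g u" and sv: "dirichlet_solution E X f g v"
    show "u = v"
    proof (rule ext)
      fix m
      show "u m = v m"
        using sg
      proof
        assume f0: "\<forall>x\<in>X. f x \<ge> 0"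
        show ?thesis using uniq_le[OF allN su sv f0, of m] uniq_le[OF allN sv su f0, of m] by simp
      next
        assume f0: "\<forall>x\<in>X. f x \<le> 0"
        have f0': "\<forall>x\<in>X. - f x \<ge> 0" using f0 by auto
        show ?thesis using uniq_le[OF allN sol_neg[OF su] sol_neg[OF sv] f0', of m]
            uniq_le[OF allN sol_neg[OF sv] sol_neg[OF su] f0', of m] by simp
      qed
    qed
  qed
qed

end
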